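(* There exist a transient MDP with a sink state and a risk level $\beta>0$ such that $g^\star_\infty(\beta)=-\infty$.
   Context: MDP: states $\bar{\mathcal S}=\{1,\dots,S,S+1\}$, $e:=S+1$ a sink state, $\mathcal S=\{1,\dots,S\}$; finite actions; transitions $p(s,a,s')$, real rewards $r(s,a,s')$; $p(e,a,e)=1$, $r(e,a,e)=0$; initial distribution $\mu$ on $\mathcal S$ with $\mu>0$. Transient: for every stationary deterministic policy $\pi$, $\sum_{t\ge0}\mathbb P^{\pi,s}[\tilde s_t=s']<\infty$ for all $s,s'\in\mathcal S$. $\mathrm{ERM}_\beta[\tilde x]=-\beta^{-1}\log\mathbb E e^{-\beta\tilde x}$. $g_t(\pi,\beta)=\mathrm{ERM}^{\pi,\mu}_\beta[\sum_{k=0}^t r(\tilde s_k,\tilde a_k,\tilde s_{k+1})]$, $g^\star_t(\beta)=\sup_{\pi}g_t(\pi,\beta)$ over history-dependent randomized policies, and $g^\star_\infty(\beta)=\liminf_{t\to\infty}g^\star_t(\beta)$. *)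

theory Defs
  imports "HOL-Analysis.Analysis" "HOL-Library.Liminf_Limsup"
begin

text \<open>States are 1..S+1, with sink state e = S+1; actions are 0..<A.
  Transitions p s a s', rewards r s a s', initial distribution mu.\<close>

definition states_bar :: "nat \<Rightarrow> nat set" where
  "states_bar S = {1..S+1}"

definition states :: "nat \<Rightarrow> nat set" where
  "states S = {1..S}"

definition actions :: "nat \<Rightarrow> nat set" where
  "actions A = {0..<A}"

definition is_mdp ::
  "nat \<Rightarrow> nat \<Rightarrow> (nat \<Rightarrow> nat \<Rightarrow> nat \<Rightarrow> real) \<Rightarrow> (nat \<Rightarrow> nat \<Rightarrow> nat \<Rightarrow> real)
   \<Rightarrow> (nat \<Rightarrow> real) \<Rightarrow> bool" where
  "is_mdp S A p r \<mu> \<longleftrightarrow>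
     A \<ge> 1 \<and>
     (\<forall>s\<in>states_bar S. \<forall>a\<in>actions A.
        (\<forall>s'\<in>states_bar S. p s a s' \<ge> 0) \<and> (\<Sum>s'\<in>states_bar S. p s a s') = 1) \<and>
     (\<forall>a\<in>actions A. p (S+1) a (S+1) = 1 \<and> r (S+1) a (S+1) = 0) \<and>
     (\<forall>s\<in>states S. \<mu> s > 0) \<and> (\<Sum>s\<in>states S. \<mu> s) = 1"

fun occ :: "nat \<Rightarrow> (nat \<Rightarrow> nat \<Rightarrow> nat \<Rightarrow> real) \<Rightarrow> (nat \<Rightarrow> nat) \<Rightarrow> nat \<Rightarrow> nat \<Rightarrow> nat \<Rightarrow> real" where
  "occ S p d s 0 s' = (if s' = s then 1 else 0)"
| "occ S p d s (Suc n) s' = (\<Sum>s''\<in>states_bar S. occ S p d s n s'' * p s'' (d s'') s')"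

definition transient :: "nat \<Rightarrow> nat \<Rightarrow> (nat \<Rightarrow> nat \<Rightarrow> nat \<Rightarrow> real) \<Rightarrow> bool" where
  "transient S A p \<longleftrightarrow>
     (\<forall>d. (\<forall>s\<in>states_bar S. d s \<in> actions A) \<longrightarrow>
        (\<forall>s\<in>states S. \<forall>s'\<in>states S. summable (\<lambda>n. occ S p d s n s')))"

text \<open>History-dependent randomized policies: pi ss as a is the probability of
  choosing action a given the state history ss (s_0..s_k) and action history as (a_0..a_{k-1}).\<close>
definition valid_policy :: "nat \<Rightarrow> (nat list \<Rightarrow> nat list \<Rightarrow> nat \<Rightarrow> real) \<Rightarrow> bool" where
  "valid_policy A \<pi> \<longleftrightarrow>
     (\<forall>ss as. (\<forall>a\<in>actions A. \<pi> ss as a \<ge> 0) \<and> (\<Sum>a\<in>actions A. \<pi> ss as a) = 1)"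

definition traj_prob ::
  "(nat \<Rightarrow> nat \<Rightarrow> nat \<Rightarrow> real) \<Rightarrow> (nat \<Rightarrow> real) \<Rightarrow> (nat list \<Rightarrow> nat list \<Rightarrow> nat \<Rightarrow> real)
   \<Rightarrow> nat \<Rightarrow> nat list \<Rightarrow> nat list \<Rightarrow> real" where
  "traj_prob p \<mu> \<pi> t ss as =
     \<mu> (ss ! 0) * (\<Prod>k\<le>t. \<pi> (take (Suc k) ss) (take k as) (as ! k) * p (ss ! k) (as ! k) (ss ! Suc k))"

definition traj_return :: "(nat \<Rightarrow> nat \<Rightarrow> nat \<Rightarrow> real) \<Rightarrow> nat \<Rightarrow> nat list \<Rightarrow> nat list \<Rightarrow> real" where
  "traj_return r t ss as = (\<Sum>k\<le>t. r (ss ! k) (as ! k) (ss ! Suc k))"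

definition state_seqs :: "nat \<Rightarrow> nat \<Rightarrow> nat list set" where
  "state_seqs S t = {ss. length ss = t + 2 \<and> set ss \<subseteq> states_bar S}"

definition action_seqs :: "nat \<Rightarrow> nat \<Rightarrow> nat list set" where
  "action_seqs A t = {as. length as = t + 1 \<and> set as \<subseteq> actions A}"

definition g_t ::
  "nat \<Rightarrow> nat \<Rightarrow> (nat \<Rightarrow> nat \<Rightarrow> nat \<Rightarrow> real) \<Rightarrow> (nat \<Rightarrow> nat \<Rightarrow> nat \<Rightarrow> real) \<Rightarrow> (nat \<Rightarrow> real)
   \<Rightarrow> nat \<Rightarrow> (nat list \<Rightarrow> nat list \<Rightarrow> nat \<Rightarrow> real) \<Rightarrow> real \<Rightarrow> real" where
  "g_t S A p r \<mu> t \<pi> \<beta> =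
     - (1 / \<beta>) * ln (\<Sum>ss\<in>state_seqs S t. \<Sum>as\<in>action_seqs A t.
          traj_prob p \<mu> \<pi> t ss as * exp (- \<beta> * traj_return r t ss as))"

definition g_star_t ::
  "nat \<Rightarrow> nat \<Rightarrow> (nat \<Rightarrow> nat \<Rightarrow> nat \<Rightarrow> real) \<Rightarrow> (nat \<Rightarrow> nat \<Rightarrow> nat \<Rightarrow> real) \<Rightarrow> (nat \<Rightarrow> real)
   \<Rightarrow> nat \<Rightarrow> real \<Rightarrow> ereal" where
  "g_star_t S A p r \<mu> t \<beta> = (SUP \<pi>\<in>{\<pi>. valid_policy A \<pi>}. ereal (g_t S A p r \<mu> t \<pi> \<beta>))"

definition g_star_inf ::
  "nat \<Rightarrow> nat \<Rightarrow> (nat \<Rightarrow> nat \<Rightarrow> nat \<Rightarrow> real) \<Rightarrow> (nat \<Rightarrow> nat \<Rightarrow> nat \<Rightarrow> real) \<Rightarrow> (nat \<Rightarrow> real)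
   \<Rightarrow> real \<Rightarrow> ereal" where
  "g_star_inf S A p r \<mu> \<beta> = liminf (\<lambda>t. g_star_t S A p r \<mu> t \<beta>)"

end

theory Submission
  imports Defs
begin

definition pP :: "nat \<Rightarrow> nat \<Rightarrow> nat \<Rightarrow> real" where
  "pP s a s' = (if s = 1 then (if s' = 1 \<or> s' = 2 then 1/2 else 0) else (if s' = 2 then 1 else 0))"
definition rR :: "nat \<Rightarrow> nat \<Rightarrow> nat \<Rightarrow> real" where
  "rR s a s' = (if s = 1 \<and> s' = 1 then - (1 + ln 2) else 0)"
definition muM :: "nat \<Rightarrow> real" where
  "muM s = (if s = 1 then 1 else 0)"

lemma sb: "states_bar 1 = {1,2}" by (auto simp: states_bar_def)
lemma sb1: "states_bar (Suc 0) = {1,2}" by (auto simp: states_bar_def)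

lemma mdp: "is_mdp 1 1 pP rR muM"
  unfolding is_mdp_def by (simp add: sb sb1 states_def actions_def pP_def rR_def muM_def)

lemma occ1: "occ 1 pP d 1 n 1 = (1/2)^n"
proof (induction n)
  case 0 then show ?case by simp
next
  case (Suc n) then show ?case by (simp add: sb sb1 sb1 pP_def)
qed

lemma trans_ok: "transient 1 1 pP"
  unfolding transient_def states_def
  by (auto simp: occ1[simplified] summable_geometric)

lemma gt_le:
  assumes "valid_policy 1 \<pi>"
  shows "g_t 1 1 pP rR muM t \<pi> 1 \<le> - (real t + 1)"
proof -
  have pi0: "\<pi> ss as 0 = 1" for ss as
    using assms unfolding valid_policy_def actions_def by auto
  have pinn: "\<pi> ss as a \<ge> 0" if "a \<in> actions 1" for ss as a
    using assms that unfolding valid_policy_def by auto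
  define ss0 where "ss0 = replicate (t+2) (1::nat)"
  define as0 where "as0 = replicate (t+1) (0::nat)"
  have ss0: "ss0 \<in> state_seqs 1 t" by (auto simp add: ss0_def state_seqs_def sb sb1)
  have as0: "as0 \<in> action_seqs 1 t" by (auto simp add: as0_def action_seqs_def actions_def)
  have ssk: "ss0 ! k = 1" if "k < t+2" for k using that unfolding ss0_def by (metis nth_replicate)
  have ask: "as0 ! k = 0" if "k < t+1" for k using that unfolding as0_def by (metis nth_replicate)
  let ?F = "\<lambda>ss as. traj_prob pP muM \<pi> t ss as * exp (- 1 * traj_return rR t ss as)"
  have pr: "(\<Prod>k\<le>t. \<pi> (take (Suc k) ss0) (take k as0) (as0 ! k) * pP (ss0 ! k) (as0 ! k) (ss0 ! Suc k))
      = (\<Prod>k\<le>t. (1/2::real))"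
    by (rule prod.cong) (simp_all add: ssk ask pi0 pP_def)
  have tp: "traj_prob pP muM \<pi> t ss0 as0 = (1/2)^(t+1)"
    unfolding traj_prob_def pr by (simp add: ssk muM_def)
  have sm: "(\<Sum>k\<le>t. rR (ss0 ! k) (as0 ! k) (ss0 ! Suc k)) = (\<Sum>k\<le>t. - (1 + ln 2))"
    by (rule sum.cong) (simp_all add: ssk ask rR_def)
  have tr: "traj_return rR t ss0 as0 = - (real t + 1) * (1 + ln 2)"
    unfolding traj_return_def sm by (simp add: algebra_simps)
  have e2: "exp (real (Suc t) * ln 2) = 2^(Suc t)"
    by (metis exp_ln exp_of_nat_mult zero_less_numeral)
  have ex: "exp ((real t + 1) * (1 + ln 2)) = exp (real t + 1) * 2^(t+1)"
  proof -
    have "(real t + 1) * (1 + ln 2) = (real t + 1) + real (Suc t) * ln 2"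
      by (simp add: algebra_simps)
    then show ?thesis using e2 by (simp add: exp_add)
  qed
  have trm: "?F ss0 as0 = exp (real t + 1)"
  proof -
    have "?F ss0 as0 = (1/2)^(t+1) * exp ((real t + 1) * (1 + ln 2))"
      by (simp add: tp tr algebra_simps)
    also have "\<dots> = exp (real t + 1)" unfolding ex by (simp add: power_divide)
    finally show ?thesis .
  qed
  have nn: "?F ss as \<ge> 0" if "ss \<in> state_seqs 1 t" "as \<in> action_seqs 1 t" for ss as
  proof -
    have "traj_prob pP muM \<pi> t ss as \<ge> 0"
      unfolding traj_prob_def
      apply (rule mult_nonneg_nonneg)
       apply (simp add: muM_def)
      apply (rule prod_nonneg)
      apply (rule mult_nonneg_nonneg)
       apply (rule pinn)
      using that by (auto simp: action_seqs_def pP_def)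
    then show ?thesis by simp
  qed
  have fin1: "finite (state_seqs 1 t)"
  proof -
    have "state_seqs 1 t \<subseteq> {xs. set xs \<subseteq> {1,2} \<and> length xs = t + 2}"
      by (auto simp: state_seqs_def sb sb1)
    then show ?thesis using finite_lists_length_eq[of "{1::nat,2}" "t+2"] finite_subset by blast
  qed
  have fin2: "finite (action_seqs 1 t)"
  proof -
    have "action_seqs 1 t \<subseteq> {xs. set xs \<subseteq> {0::nat} \<and> length xs = t + 1}"
      by (auto simp: action_seqs_def actions_def)
    then show ?thesis using finite_lists_length_eq[of "{0::nat}" "t+1"] finite_subset by blast
  qed
  have "exp (real t + 1) \<le> (\<Sum>as\<in>action_seqs 1 t. ?F ss0 as)"
    using member_le_sum[OF as0, of "?F ss0"] nn[OF ss0] fin2 trm by auto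
  also have "\<dots> \<le> (\<Sum>ss\<in>state_seqs 1 t. \<Sum>as\<in>action_seqs 1 t. ?F ss as)"
  proof (rule member_le_sum[OF ss0 _ fin1])
    fix x assume "x \<in> state_seqs 1 t - {ss0}"
    then show "0 \<le> (\<Sum>as\<in>action_seqs 1 t. ?F x as)" by (intro sum_nonneg nn) auto
  qed
  finally have le: "exp (real t + 1) \<le> (\<Sum>ss\<in>state_seqs 1 t. \<Sum>as\<in>action_seqs 1 t. ?F ss as)" .
  have "ln (exp (real t + 1)) \<le> ln (\<Sum>ss\<in>state_seqs 1 t. \<Sum>as\<in>action_seqs 1 t. ?F ss as)"
    using le by (subst ln_le_cancel_iff) (auto intro: less_le_trans[OF exp_gt_zero])
  then show ?thesis unfolding g_t_def by simp
qed

lemma gstar_le: "g_star_t 1 1 pP rR muM t 1 \<le> ereal (- (real t + 1))"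
  unfolding g_star_t_def proof (rule SUP_least)
  fix \<pi> assume "\<pi> \<in> {\<pi>. valid_policy 1 \<pi>}"
  then have "g_t 1 1 pP rR muM t \<pi> 1 \<le> - (real t + 1)" using gt_le by blast
  then show "ereal (g_t 1 1 pP rR muM t \<pi> 1) \<le> ereal (- (real t + 1))" by (simp only: ereal_less_eq(3))
qed

lemma lim: "g_star_inf 1 1 pP rR muM 1 = -\<infinity>"
proof -
  have t: "((\<lambda>t. ereal (- (real t + 1))) \<longlongrightarrow> -\<infinity>) sequentially"
    unfolding tendsto_MInfty
  proof
    fix r :: real
    obtain N :: nat where "N > - r" using reals_Archimedean2 by blast
    then show "\<forall>\<^sub>F x in sequentially. ereal (- (real x + 1)) < ereal r"
      by (intro eventually_sequentiallyI[of N]) auto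
  qed
  have "g_star_inf 1 1 pP rR muM 1 \<le> liminf (\<lambda>t. ereal (- (real t + 1)))"
    unfolding g_star_inf_def by (intro Liminf_mono always_eventually allI gstar_le)
  also have "\<dots> = -\<infinity>" using lim_imp_Liminf[OF _ t] by simp
  finally show ?thesis by simp
qed

theorem proposition5:
  shows "\<exists>S A p r \<mu> \<beta>. is_mdp S A p r \<mu> \<and> transient S A p \<and> \<beta> > 0 \<and>
           g_star_inf S A p r \<mu> \<beta> = -\<infinity>"
  apply (rule exI[of _ 1], rule exI[of _ 1], rule exI[of _ pP], rule exI[of _ rR], rule exI[of _ muM], rule exI[of _ 1])
  using mdp trans_ok lim by simp

end
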